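(* Let $\Gamma=\mathsf{PSL}_2(\mathbb{Z})=\langle U,S\mid U^3,S^2\rangle$, with $U$ of order $3$ and $S$ of order $2$. For $n\ge 0$ let $t(n)$ be the number of words of length $n$ in the alphabet $\{U,S\}$ that are equal to the identity in $\Gamma$. Then for every prime $p>3$, $t(p)\equiv 0 \pmod p$.
   Context: A word of length $n$ is a sequence of $n$ letters each equal to $U$ or $S$, read as the product of the corresponding elements of $\Gamma$. *)

theory Defs
  imports "HOL-Analysis.Analysis"
begin

text \<open>Gamma = PSL_2(Z) realised as SL_2(Z) modulo {I, -I}.  The generators
U (order 3 in PSL_2(Z)) and S (order 2) are the standard matrix representatives
U = [[0,-1],[1,1]], S = [[0,-1],[1,0]]; they give the presentation <U,S | U^3, S^2>.\<close>

datatype letter = LU | LS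

definition matU :: "int^2^2" where
  "matU = vector [vector [0, -1], vector [1, 1]]"

definition matS :: "int^2^2" where
  "matS = vector [vector [0, -1], vector [1, 0]]"

fun letter_mat :: "letter \<Rightarrow> int^2^2" where
  "letter_mat LU = matU"
| "letter_mat LS = matS"

definition word_mat :: "letter list \<Rightarrow> int^2^2" where
  "word_mat w = foldr (\<lambda>l M. letter_mat l ** M) w (mat 1)"

definition word_is_id :: "letter list \<Rightarrow> bool" where
  "word_is_id w \<longleftrightarrow> word_mat w = mat 1 \<or> word_mat w = - mat 1"

definition t :: "nat \<Rightarrow> nat" where
  "t n = card {w :: letter list. length w = n \<and> word_is_id w}"

end

theory Submission
  imports Defs
begin

lemma mneg_l: "(- A) ** (B::int^2^2) = - (A ** B)"
  by (simp add: vec_eq_iff matrix_matrix_mult_def sum_negf)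
lemma mneg_r: "A ** (- B::int^2^2) = - (A ** B)"
  by (simp add: vec_eq_iff matrix_matrix_mult_def sum_negf)

definition matUi :: "int^2^2" where "matUi = vector [vector [1, 1], vector [-1, 0]]"
definition matSi :: "int^2^2" where "matSi = vector [vector [0, 1], vector [-1, 0]]"

lemmas mcomp = vec_eq_iff matrix_matrix_mult_def sum_2 forall_2 mat_def
   matU_def matS_def matUi_def matSi_def

lemma Ui1: "matUi ** matU = mat 1" by (simp add: mcomp)
lemma Ui2: "matU ** matUi = mat 1" by (simp add: mcomp)
lemma Si1: "matSi ** matS = mat 1" by (simp add: mcomp)
lemma Si2: "matS ** matSi = mat 1" by (simp add: mcomp)
lemma U3: "matU ** (matU ** matU) = - mat 1" by (simp add: mcomp)
lemma U3a: "matU ** matU ** matU = - mat 1" by (simp add: mcomp)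
lemma S2: "matS ** matS = - mat 1" by (simp add: mcomp)
lemma U1ne: "matU \<noteq> mat 1 \<and> matU \<noteq> - mat 1" by (simp add: mcomp)
lemma U2ne: "matU ** matU \<noteq> mat 1 \<and> matU ** matU \<noteq> - mat 1" by (simp add: mcomp)
lemma S1ne: "matS \<noteq> mat 1 \<and> matS \<noteq> - mat 1" by (simp add: mcomp)

lemma inv_ex: "\<exists>N. N ** letter_mat x = mat 1 \<and> letter_mat x ** N = mat 1"
  by (cases x) (auto intro: Ui1 Ui2 Si1 Si2)

lemma word_mat_Cons: "word_mat (x # xs) = letter_mat x ** word_mat xs"
  by (simp add: word_mat_def)

lemma word_mat_append: "word_mat (xs @ ys) = word_mat xs ** word_mat ys"
  by (induction xs) (auto simp: word_mat_def matrix_mul_assoc)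

lemma conj_swap:
  assumes "letter_mat x ** M = c" "c = mat 1 \<or> c = - mat 1"
  shows "M ** letter_mat x = c"
proof -
  obtain N where N: "N ** letter_mat x = mat 1" "letter_mat x ** N = mat 1" using inv_ex by blast
  have "M = N ** (letter_mat x ** M)" using N by (simp add: matrix_mul_assoc)
  then have M: "M = N ** c" using assms by simp
  show ?thesis using assms(2)
  proof
    assume "c = mat 1" then show ?thesis using M N by simp
  next
    assume c: "c = - mat 1" then show ?thesis using M N by (simp add: mneg_l mneg_r)
  qed
qed

lemma id_rotate1: "word_is_id w \<Longrightarrow> word_is_id (rotate1 w)"
proof (cases w)
  case (Cons x xs)
  assume "word_is_id w"
  then have "letter_mat x ** word_mat xs = mat 1 \<or> letter_mat x ** word_mat xs = - mat 1"
    using Cons by (simp add: word_is_id_def word_mat_Cons)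
  then have "word_mat xs ** letter_mat x = mat 1 \<or> word_mat xs ** letter_mat x = - mat 1"
    using conj_swap by blast
  moreover have "word_mat [x] = letter_mat x" by (simp add: word_mat_def)
  ultimately show ?thesis using Cons by (simp add: word_is_id_def word_mat_append)
qed simp

lemma id_rotate: "word_is_id w \<Longrightarrow> word_is_id (rotate k w)"
  by (induction k) (auto simp: id_rotate1)

lemma rep_U: "word_is_id (replicate n LU) \<Longrightarrow> 3 dvd n"
proof (induction n rule: less_induct)
  case (less n)
  show ?case
  proof (cases "n \<ge> 3")
    case True
    define m where "m = n - 3"
    have n: "n = Suc (Suc (Suc m))" using True m_def by simp
    have "word_mat (replicate n LU) = - word_mat (replicate m LU)"
      by (simp add: n word_mat_Cons matrix_mul_assoc U3a mneg_l)
    then have "word_is_id (replicate m LU)" using less.prems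
      by (auto simp: word_is_id_def minus_equation_iff)
    then have "3 dvd m" using less.IH n by auto
    then show ?thesis using n by presburger
  next
    case False
    then have "n = 0 \<or> n = 1 \<or> n = 2" by auto
    then show ?thesis using less.prems U1ne U2ne
      by (auto simp: word_is_id_def word_mat_def numeral_2_eq_2)
  qed
qed

lemma rep_S: "word_is_id (replicate n LS) \<Longrightarrow> 2 dvd n"
proof (induction n rule: less_induct)
  case (less n)
  show ?case
  proof (cases "n \<ge> 2")
    case True
    define m where "m = n - 2"
    have n: "n = Suc (Suc m)" using True m_def by simp
    have "word_mat (replicate n LS) = - word_mat (replicate m LS)"
      by (simp add: n word_mat_Cons matrix_mul_assoc S2 mneg_l)
    then have "word_is_id (replicate m LS)" using less.prems
      by (auto simp: word_is_id_def minus_equation_iff)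
    then have "2 dvd m" using less.IH n by auto
    then show ?thesis using n by presburger
  next
    case False
    then have "n = 0 \<or> n = 1" by auto
    then show ?thesis using less.prems S1ne
      by (auto simp: word_is_id_def word_mat_def)
  qed
qed

lemma rotate1_fixed_const:
  assumes "rotate1 w = w"
  shows "w = replicate (length w) (w ! 0)"
proof (rule nth_equalityI)
  fix i assume i: "i < length w"
  have "w ! i = w ! 0" using i
  proof (induction i)
    case (Suc i)
    have "w ! Suc i = rotate1 w ! i" using Suc.prems by (simp add: nth_rotate1)
    then show ?case using assms Suc by simp
  qed simp
  then show "w ! i = replicate (length w) (w ! 0) ! i" using i by simp
qed simp

lemma rotate_fixed_prime:
  assumes p: "prime p" "length w = p" and k: "0 < k" "k < p" and r: "rotate k w = w"
  shows "rotate1 w = w"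
proof -
  have nd: "\<not> p dvd k" using k by (simp add: nat_dvd_not_less)
  have "coprime p k" by (rule prime_imp_coprime[OF p(1) nd])
  then have cop: "coprime k p" by (simp add: coprime_commute)
  have g: "gcd k p = 1" using cop by simp
  obtain m y where my: "k * m = p * y + gcd k p" using bezout_nat[of k p] k by auto
  have "k * m = 1 + y * p" using my g by (simp add: mult.commute)
  moreover have "(1 + y * p) mod p = 1 mod p" by (rule mod_mult_self1)
  ultimately have m: "(k * m) mod p = 1 mod p" by simp
  have pm: "\<And>j. rotate (k * j) w = w"
  proof -
    fix j show "rotate (k * j) w = w"
      by (induction j) (simp_all add: rotate_rotate[symmetric] r add.commute)
  qed
  have "rotate (k*m) w = rotate ((k*m) mod p) w" using p(2) by (simp add: rotate_conv_mod[of "k*m" w])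
  also have "(k*m) mod p = 1" using m prime_gt_1_nat[OF p(1)] by simp
  also have "rotate 1 w = rotate1 w" by simp
  finally show ?thesis using pm by simp
qed

theorem proposition1:
  fixes p :: nat
  assumes "prime p" and "p > 3"
  shows "t p mod p = 0"
proof -
  define A where "A = {w :: letter list. length w = p \<and> word_is_id w}"
  define orb where "orb w = (\<lambda>k. rotate k w) ` {..<p}" for w :: "letter list"
  have finA: "finite A"
  proof (rule finite_subset)
    show "A \<subseteq> {xs. set xs \<subseteq> {LU, LS} \<and> length xs = p}"
    proof
      fix w assume "w \<in> A"
      have "x \<in> {LU, LS}" for x by (cases x) auto
      then show "w \<in> {xs. set xs \<subseteq> {LU, LS} \<and> length xs = p}" using \<open>w \<in> A\<close>
        unfolding A_def by blast
    qed
    show "finite {xs. set xs \<subseteq> {LU, LS} \<and> length xs = p}"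
      by (rule finite_lists_length_eq) simp
  qed
  have nofix: "rotate1 w \<noteq> w" if "w \<in> A" for w
  proof
    assume "rotate1 w = w"
    then have w0: "w = replicate (length w) (w ! 0)" by (rule rotate1_fixed_const)
    have lw: "length w = p" using that by (simp add: A_def)
    define x where "x = w ! 0"
    have w: "w = replicate p x" by (subst w0) (simp add: lw x_def)
    have pa: "\<forall>m. m dvd p \<longrightarrow> m = 1 \<or> m = p" using assms(1) by (simp add: prime_nat_iff)
    have odd: "\<not> 2 dvd p" using pa[rule_format, of 2] assms(2) by auto
    have n3: "\<not> 3 dvd p" using pa[rule_format, of 3] assms(2) by auto
    have "word_is_id w" using that by (simp add: A_def)
    then have "word_is_id (replicate p x)" using w by simp
    then show False using rep_U[of p] rep_S[of p] odd n3
      by (cases x) auto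
  qed
  have rotA: "rotate k w \<in> A" if "w \<in> A" for w k
    using that id_rotate by (auto simp: A_def)
  have cardorb: "card (orb w) = p" if "w \<in> A" for w
  proof -
    have lw: "length w = p" using that by (simp add: A_def)
    have "inj_on (\<lambda>k. rotate k w) {..<p}"
    proof (rule inj_onI, rule ccontr)
      fix i j assume i: "i \<in> {..<p}" and j: "j \<in> {..<p}" and e: "rotate i w = rotate j w" and ne: "i \<noteq> j"
      have gen: "rotate (b - a) w = w" if "a < b" "b < p" "rotate a w = rotate b w" for a b
      proof -
        have "rotate (p - a) (rotate b w) = rotate (p - a + b) w" by (simp add: rotate_rotate)
        also have "p - a + b = (b - a) + p" using that by simp
        also have "rotate ((b - a) + p) w = rotate (((b - a) + p) mod length w) w" by (rule rotate_conv_mod)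
        also have "\<dots> = rotate ((b - a) mod length w) w" using lw by simp
        also have "\<dots> = rotate (b - a) w" by (rule rotate_conv_mod[symmetric])
        finally have "rotate (b - a) w = rotate (p - a) (rotate b w)" by simp
        also have "\<dots> = rotate (p - a) (rotate a w)" using that by simp
        also have "\<dots> = rotate p w" using \<open>a < b\<close> \<open>b < p\<close> by (simp only: rotate_rotate, simp)
        also have "\<dots> = w" using lw by simp
        finally show ?thesis .
      qed
      have "rotate1 w = w"
      proof (cases "i < j")
        case True
        then show ?thesis using gen[of i j] i j e rotate_fixed_prime[OF assms(1) lw, of "j - i"] by auto
      next
        case False
        then have "j < i" using ne by simp
        then show ?thesis using gen[of j i] i j e rotate_fixed_prime[OF assms(1) lw, of "i - j"] by auto
      qed
      then show False using nofix that by simp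
    qed
    then show ?thesis by (simp add: orb_def card_image)
  qed
  have memorb: "v \<in> orb w \<longleftrightarrow> (\<exists>k. v = rotate k w)" if "w \<in> A" for v w
  proof -
    have lw: "length w = p" using that by (simp add: A_def)
    have "p > 0" using assms by simp
    show ?thesis
    proof
      assume "v \<in> orb w" then show "\<exists>k. v = rotate k w" unfolding orb_def by blast
    next
      assume "\<exists>k. v = rotate k w"
      then obtain k where k: "v = rotate k w" by blast
      then have "v = rotate (k mod p) w" using lw by (simp add: rotate_conv_mod[of k w])
      moreover have "k mod p \<in> {..<p}" using \<open>p > 0\<close> by simp
      ultimately show "v \<in> orb w" unfolding orb_def by blast
    qed
  qed
  have orbeq: "orb v = orb w" if "w \<in> A" "v \<in> orb w" for v w
  proof -
    have "\<exists>k. v = rotate k w" using memorb[OF that(1)] that(2) by blast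
    then obtain k where k: "v = rotate k w" by blast
    have vA: "v \<in> A" using k rotA that by simp
    have lw: "length w = p" using that by (simp add: A_def)
    have pp: "p > 0" using assms by simp
    have "rotate (p - k mod p) v = rotate (p - k mod p + k) w" using k by (simp add: rotate_rotate)
    also have "\<dots> = rotate ((p - k mod p + k) mod p) w" using lw by (simp add: rotate_conv_mod[of "p - k mod p + k" w])
    also have "(p - k mod p + k) mod p = 0"
    proof -
      have e1: "k = p * (k div p) + k mod p" by simp
      have e2: "k mod p < p" using pp by simp
      have "p - k mod p + k = p + p * (k div p)" using e1 e2 by linarith
      then show ?thesis by simp
    qed
    finally have "w = rotate (p - k mod p) v" by simp
    show ?thesis
    proof (rule set_eqI)
      fix u
      have "(\<exists>j. u = rotate j v) \<longleftrightarrow> (\<exists>j. u = rotate j w)"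
      proof
        assume "\<exists>j. u = rotate j v" then obtain j where "u = rotate j v" by blast
        then have "u = rotate (j + k) w" using k by (simp add: rotate_rotate)
        then show "\<exists>j. u = rotate j w" by blast
      next
        assume "\<exists>j. u = rotate j w" then obtain j where "u = rotate j w" by blast
        then have "u = rotate (j + (p - k mod p)) v" using \<open>w = _\<close> by (simp add: rotate_rotate)
        then show "\<exists>j. u = rotate j v" by blast
      qed
      then show "u \<in> orb v \<longleftrightarrow> u \<in> orb w" by (simp only: memorb[OF vA] memorb[OF that(1)])
    qed
  qed
  have UA: "\<Union> (orb ` A) = A"
  proof
    show "\<Union> (orb ` A) \<subseteq> A"
    proof
      fix u assume "u \<in> \<Union> (orb ` A)"
      then obtain w where w: "w \<in> A" "u \<in> orb w" by blast
      then have "\<exists>k. u = rotate k w" by (simp only: memorb[OF w(1)])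
      then show "u \<in> A" using rotA[OF w(1)] by blast
    qed
    show "A \<subseteq> \<Union> (orb ` A)"
    proof
      fix w assume "w \<in> A"
      have "w = rotate 0 w" by simp
      then have "w \<in> orb w" by (subst memorb[OF \<open>w \<in> A\<close>]) blast
      then show "w \<in> \<Union> (orb ` A)" using \<open>w \<in> A\<close> by blast
    qed
  qed
  have "p dvd card (\<Union> (orb ` A))"
  proof (rule dvd_partition)
    show "finite (\<Union> (orb ` A))" using UA finA by simp
    show "\<forall>c\<in>orb ` A. p dvd card c" using cardorb by (simp add: image_iff) 
    show "\<forall>c1\<in>orb ` A. \<forall>c2\<in>orb ` A. c1 \<noteq> c2 \<longrightarrow> c1 \<inter> c2 = {}"
    proof (intro ballI impI)
      fix c1 c2 assume "c1 \<in> orb ` A" "c2 \<in> orb ` A" "c1 \<noteq> c2"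
      then obtain w1 w2 where w: "w1 \<in> A" "w2 \<in> A" "c1 = orb w1" "c2 = orb w2" by blast
      show "c1 \<inter> c2 = {}"
      proof (rule ccontr)
        assume "c1 \<inter> c2 \<noteq> {}"
        then obtain u where "u \<in> orb w1" "u \<in> orb w2" using w by blast
        then have "orb u = orb w1" "orb u = orb w2" using orbeq[OF w(1)] orbeq[OF w(2)] by blast+
        then show False using w \<open>c1 \<noteq> c2\<close> by simp
      qed
    qed
  qed
  then show ?thesis using UA by (simp add: t_def A_def[symmetric])
qed

end
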